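(* Assume the standing assumptions in the context. Let $v=(v_1,v_2)$ be the bounded constrained viscosity solution on $[\underline{x},+\infty)$ of the system $$\rho v_j(x)=H(x,y_j,Dv_j(x))+\lambda_j\big(v_{\bar\jmath}(x)-v_j(x)\big),\qquad j=1,2,\ \bar\jmath=3-j,$$ and assume each $v_j$ is concave. Then $v_j$ is $C^1$ on $(\underline{x},+\infty)$. In particular, defining $Dv_j(\underline{x})=\lim_{\epsilon\to0^+}\frac{v_j(\underline{x}+\epsilon)-v_j(\underline{x})}{\epsilon}$, the function $Dv_j$ is uniformly continuous on $[\underline{x},R]$ for every constant $R>\underline{x}$.
   Context: Standing assumptions: $\rho>0$; $-\infty<r<\rho$; $0<y_1<y_2$; $\gamma>1$; $\underline{x}\le0$ with $\rho\underline{x}+y_j>0$ for $j=1,2$; $\lambda_1,\lambda_2\ge0$ constants. Utility $u(c)=\frac{c^{1-\gamma}}{1-\gamma}$; Hamiltonian $H(x,y_j,p)=\sup_{c\ge0}\{u(c)+(rx+y_j-c)p\}$, equal to $(rx+y_j)p+\frac{\gamma}{1-\gamma}p^{1-1/\gamma}$ for $p\ge0$ and $+\infty$ for $p<0$. Viscosity subsolution on $S\subseteq[\underline{x},\infty)$: u.s.c. pair $v$ such that whenever $\varphi$ smooth, $j\in\{1,2\}$, and $v_j-\varphi$ has a local max (relative to $[\underline{x},\infty)$) at $x_0\in S$, then $\rho v_j(x_0)\le H(x_0,y_j,D\varphi(x_0))+\lambda_j(v_{\bar\jmath}(x_0)-v_j(x_0))$. Viscosity supersolution on $S$: l.s.c.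 pair with the reverse inequality at local minima $x_0\in S$. A constrained viscosity solution is a continuous pair that is a viscosity supersolution on $(\underline{x},\infty)$ and a viscosity subsolution on $[\underline{x},\infty)$. *)

theory Defs
  imports "HOL-Analysis.Analysis"
begin

definition util :: "real \<Rightarrow> real \<Rightarrow> real" where
  "util \<gamma> c = c powr (1 - \<gamma>) / (1 - \<gamma>)"

text \<open>Hamiltonian H(x,y,p) = sup_{c>=0} (u c + (r x + y - c) p), in closed form,
  with value +infinity for p < 0.\<close>
definition Ham :: "real \<Rightarrow> real \<Rightarrow> real \<Rightarrow> real \<Rightarrow> real \<Rightarrow> ereal" where
  "Ham r \<gamma> x y p =
     (if p \<ge> 0 then ereal ((r * x + y) * p + \<gamma> / (1 - \<gamma>) * p powr (1 - 1 / \<gamma>)) else \<infinity>)"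

definition smooth_fun :: "(real \<Rightarrow> real) \<Rightarrow> bool" where
  "smooth_fun \<phi> \<longleftrightarrow> (\<forall>n x. ((deriv ^^ n) \<phi>) differentiable (at x))"

definition loc_max_rel :: "real \<Rightarrow> (real \<Rightarrow> real) \<Rightarrow> real \<Rightarrow> bool" where
  "loc_max_rel xl f x0 \<longleftrightarrow> (\<exists>\<delta>>0. \<forall>x\<in>{xl..}. \<bar>x - x0\<bar> < \<delta> \<longrightarrow> f x \<le> f x0)"

definition loc_min_rel :: "real \<Rightarrow> (real \<Rightarrow> real) \<Rightarrow> real \<Rightarrow> bool" where
  "loc_min_rel xl f x0 \<longleftrightarrow> (\<exists>\<delta>>0. \<forall>x\<in>{xl..}. \<bar>x - x0\<bar> < \<delta> \<longrightarrow> f x \<ge> f x0)"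

definition usc_on :: "real set \<Rightarrow> (real \<Rightarrow> real) \<Rightarrow> bool" where
  "usc_on A f \<longleftrightarrow> (\<forall>x0\<in>A. \<forall>e>0. \<exists>\<delta>>0. \<forall>x\<in>A. \<bar>x - x0\<bar> < \<delta> \<longrightarrow> f x < f x0 + e)"

definition lsc_on :: "real set \<Rightarrow> (real \<Rightarrow> real) \<Rightarrow> bool" where
  "lsc_on A f \<longleftrightarrow> (\<forall>x0\<in>A. \<forall>e>0. \<exists>\<delta>>0. \<forall>x\<in>A. \<bar>x - x0\<bar> < \<delta> \<longrightarrow> f x > f x0 - e)"

text \<open>Pair v = (v 1, v 2); y j and lam j are the incomes and switching intensities;
  the other index is 3 - j. Semicontinuity is on the whole domain [xl, infinity).\<close>
definition visc_sub ::
  "real \<Rightarrow> real \<Rightarrow> real \<Rightarrow> (nat \<Rightarrow> real) \<Rightarrow> (nat \<Rightarrow> real) \<Rightarrow> real \<Rightarrow> real set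
   \<Rightarrow> (nat \<Rightarrow> real \<Rightarrow> real) \<Rightarrow> bool" where
  "visc_sub \<rho> r \<gamma> y lam xl S v \<longleftrightarrow>
     (\<forall>j\<in>{1,2}. usc_on {xl..} (v j)) \<and>
     (\<forall>\<phi> j x0. smooth_fun \<phi> \<and> j \<in> {1,2} \<and> x0 \<in> S \<and> loc_max_rel xl (\<lambda>x. v j x - \<phi> x) x0 \<longrightarrow>
        ereal (\<rho> * v j x0) \<le> Ham r \<gamma> x0 (y j) (deriv \<phi> x0) + ereal (lam j * (v (3 - j) x0 - v j x0)))"

definition visc_super ::
  "real \<Rightarrow> real \<Rightarrow> real \<Rightarrow> (nat \<Rightarrow> real) \<Rightarrow> (nat \<Rightarrow> real) \<Rightarrow> real \<Rightarrow> real set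
   \<Rightarrow> (nat \<Rightarrow> real \<Rightarrow> real) \<Rightarrow> bool" where
  "visc_super \<rho> r \<gamma> y lam xl S v \<longleftrightarrow>
     (\<forall>j\<in>{1,2}. lsc_on {xl..} (v j)) \<and>
     (\<forall>\<phi> j x0. smooth_fun \<phi> \<and> j \<in> {1,2} \<and> x0 \<in> S \<and> loc_min_rel xl (\<lambda>x. v j x - \<phi> x) x0 \<longrightarrow>
        ereal (\<rho> * v j x0) \<ge> Ham r \<gamma> x0 (y j) (deriv \<phi> x0) + ereal (lam j * (v (3 - j) x0 - v j x0)))"

definition constrained_visc_sol ::
  "real \<Rightarrow> real \<Rightarrow> real \<Rightarrow> (nat \<Rightarrow> real) \<Rightarrow> (nat \<Rightarrow> real) \<Rightarrow> real
   \<Rightarrow> (nat \<Rightarrow> real \<Rightarrow> real) \<Rightarrow> bool" where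
  "constrained_visc_sol \<rho> r \<gamma> y lam xl v \<longleftrightarrow>
     (\<forall>j\<in>{1,2}. continuous_on {xl..} (v j)) \<and>
     visc_super \<rho> r \<gamma> y lam xl {xl<..} v \<and>
     visc_sub \<rho> r \<gamma> y lam xl {xl..} v"

end

theory Submission
  imports Defs
begin


lemma bern_strict:
  fixes u al :: real assumes "0 \<le> u" "u \<noteq> 1" "0 < al" "al < 1"
  shows "u powr al < 1 + al*(u-1)"
proof -
  define h where "h t = 1 + al*(t-1) - t powr al" for t
  have der: "DERIV h t :> al - al * t powr (al - 1)" if "t > 0" for t
    unfolding h_def using that
    by (auto intro!: derivative_eq_intros has_real_derivative_powr simp: algebra_simps)
  have h1: "h 1 = 0" unfolding h_def by simp
  consider "u = 0" | "0 < u" "u < 1" | "1 < u" using assms by linarith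
  thus ?thesis
  proof cases
    case 1 thus ?thesis using assms by simp
  next
    case 2
    have "h u > h 1"
    proof (rule DERIV_neg_imp_decreasing_open[OF 2(2)])
      fix t assume t: "u < t" "t < 1"
      have "1 powr (al-1) < t powr (al-1)" using t 2 assms by (intro powr_less_mono2_neg) auto
      hence "al - al * t powr (al - 1) < 0" using assms by simp
      thus "\<exists>y. DERIV h t :> y \<and> y < 0" using der[of t] t 2 by auto
    next
      show "continuous_on {u..1} h" unfolding h_def using 2
        by (intro continuous_intros) auto
    qed
    thus ?thesis using h1 unfolding h_def by simp
  next
    case 3
    have "h 1 < h u"
    proof (rule DERIV_pos_imp_increasing_open[OF 3])
      fix t assume t: "1 < t" "t < u"
      have "t powr (al-1) < 1" using t assms by (intro powr_less_one) auto
      hence "al - al * t powr (al - 1) > 0" using assms by simp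
      thus "\<exists>y. DERIV h t :> y \<and> y > 0" using der[of t] t by auto
    next
      show "continuous_on {1..u} h" unfolding h_def
        by (intro continuous_intros) auto
    qed
    thus ?thesis using h1 unfolding h_def by simp
  qed
qed

lemma powr_tangent_strict:
  fixes x m al :: real assumes "0 < m" "0 \<le> x" "x \<noteq> m" "0 < al" "al < 1"
  shows "x powr al < m powr al + al * m powr (al - 1) * (x - m)"
proof -
  define u where "u = x / m"
  have u: "0 \<le> u" "u \<noteq> 1" using assms unfolding u_def by auto
  have xe: "x = m * u" unfolding u_def using assms by simp
  have "x powr al = m powr al * u powr al" unfolding xe using assms u by (simp add: powr_mult)
  also have "\<dots> < m powr al * (1 + al*(u-1))"
    using bern_strict[OF u assms(4,5)] assms by simp
  also have "m powr al * (1 + al*(u-1)) = m powr al + al * (m powr al) * (u - 1)" by (simp add: algebra_simps)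
  finally have 1: "x powr al < m powr al + al * (m powr al) * (u - 1)" .
  have eq: "m powr al = m powr (al - 1) * m" using assms by (simp add: powr_diff)
  have "al * m powr (al - 1) * (x - m) = al * (m powr (al-1) * m) * (u - 1)" unfolding xe by (simp add: algebra_simps)
  also have "\<dots> = al * (m powr al) * (u - 1)" using eq by simp
  finally have "al * m powr (al - 1) * (x - m) = al * (m powr al) * (u - 1)" .
  thus ?thesis using 1 by linarith
qed

lemma powr_mid_strict:
  fixes a b al :: real assumes "0 \<le> a" "a < b" "0 < al" "al < 1"
  shows "a powr al + b powr al < 2 * ((a+b)/2) powr al"
proof -
  define m where "m = (a+b)/2"
  have m: "0 < m" "a \<noteq> m" "b \<noteq> m" "0 \<le> b" using assms unfolding m_def by auto
  define T where "T = al * m powr (al - 1)"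
  have 1: "a powr al < m powr al + T * (a - m)"
    using powr_tangent_strict[of m a al] m assms unfolding T_def by auto
  have 2: "b powr al < m powr al + T * (b - m)"
    using powr_tangent_strict[of m b al] m assms unfolding T_def by auto
  have "T * (a - m) + T * (b - m) = T * ((a - m) + (b - m))" by (simp add: algebra_simps)
  also have "(a - m) + (b - m) = 0" unfolding m_def by simp
  finally have 3: "T * (a - m) + T * (b - m) = 0" by simp
  have "a powr al + b powr al < 2 * m powr al" using 1 2 3 by linarith
  thus ?thesis unfolding m_def by simp
qed


lemma lin4a: "(X::real) - Z = P - Q + R \<Longrightarrow> -T \<le> P \<Longrightarrow> Q \<le> 0 \<Longrightarrow> T \<le> R \<Longrightarrow> Z \<le> X" by linarith
lemma lin4b: "(X::real) - Z = P - Q - R \<Longrightarrow> P \<le> T \<Longrightarrow> 0 \<le> Q \<Longrightarrow> T \<le> R \<Longrightarrow> X \<le> Z" by linarith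


lemma helper_right: fixes F :: "real \<Rightarrow> real"
  assumes "\<And>e. e > 0 \<Longrightarrow> \<exists>d>0. \<forall>t. x < t \<longrightarrow> t < x + d \<longrightarrow> \<bar>F t - l\<bar> < e"
  shows "(F \<longlongrightarrow> l) (at_right x)"
proof (rule order_tendstoI)
  fix a assume a: "a < l"
  obtain d where d: "d > 0" "\<And>t. x < t \<Longrightarrow> t < x + d \<Longrightarrow> \<bar>F t - l\<bar> < l - a" using assms[of "l - a"] a by auto
  show "eventually (\<lambda>t. a < F t) (at_right x)" unfolding eventually_at_right_field
    by (rule exI[of _ "x + d"]) (use d in force)
next
  fix a assume a: "a > l"
  obtain d where d: "d > 0" "\<And>t. x < t \<Longrightarrow> t < x + d \<Longrightarrow> \<bar>F t - l\<bar> < a - l" using assms[of "a - l"] a by auto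
  show "eventually (\<lambda>t. F t < a) (at_right x)" unfolding eventually_at_right_field
    by (rule exI[of _ "x + d"]) (use d in force)
qed

lemma helper_left: fixes F :: "real \<Rightarrow> real"
  assumes "\<And>e. e > 0 \<Longrightarrow> \<exists>d>0. \<forall>t. x - d < t \<longrightarrow> t < x \<longrightarrow> \<bar>F t - l\<bar> < e"
  shows "(F \<longlongrightarrow> l) (at_left x)"
proof (rule order_tendstoI)
  fix a assume a: "a < l"
  obtain d where d: "d > 0" "\<And>t. x - d < t \<Longrightarrow> t < x \<Longrightarrow> \<bar>F t - l\<bar> < l - a" using assms[of "l - a"] a by auto
  show "eventually (\<lambda>t. a < F t) (at_left x)" unfolding eventually_at_left_field
    by (rule exI[of _ "x - d"]) (use d in force)
next
  fix a assume a: "a > l"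
  obtain d where d: "d > 0" "\<And>t. x - d < t \<Longrightarrow> t < x \<Longrightarrow> \<bar>F t - l\<bar> < a - l" using assms[of "a - l"] a by auto
  show "eventually (\<lambda>t. F t < a) (at_left x)" unfolding eventually_at_left_field
    by (rule exI[of _ "x - d"]) (use d in force)
qed

locale VS =
  fixes xl r Y lm rho k al :: real and f g :: "real \<Rightarrow> real"
  assumes conc: "concave_on {xl..} f"
  and contf: "continuous_on {xl..} f" and contg: "continuous_on {xl..} g"
  and bddf: "bounded (f ` {xl..})" and bddg: "bounded (g ` {xl..})"
  and kneg: "k < 0" and apos: "0 < al" and alt1: "al < 1" and posxl: "r*xl + Y > 0"
  and sub0: "\<And>x0 p. xl \<le> x0 \<Longrightarrow> 0 \<le> p \<Longrightarrow> (\<forall>x\<ge>xl. f x \<le> f x0 + p*(x-x0)) \<Longrightarrow>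
      (r*x0+Y)*p + k*(p powr al) + lm*(g x0 - f x0) - rho * f x0 \<ge> 0"
  and super0: "\<And>x1 A B C d. xl < x1 \<Longrightarrow> 0 < d \<Longrightarrow>
      (\<forall>x. xl \<le> x \<longrightarrow> \<bar>x - x1\<bar> < d \<longrightarrow> f x - (A + B*x + C*x^2) \<ge> f x1 - (A + B*x1 + C*x1^2)) \<Longrightarrow>
      0 \<le> B + 2*C*x1 \<Longrightarrow>
      (r*x1+Y)*(B + 2*C*x1) + k*((B + 2*C*x1) powr al) + lm*(g x1 - f x1) - rho * f x1 \<le> 0"
begin

definition Gr where "Gr x p = (r*x+Y)*p + k*(p powr al) + lm*(g x - f x) - rho * f x"
definition s where "s x y = (f y - f x) / (y - x)"

lemma sub: "xl \<le> x0 \<Longrightarrow> 0 \<le> p \<Longrightarrow> (\<And>x. x \<ge> xl \<Longrightarrow> f x \<le> f x0 + p*(x-x0)) \<Longrightarrow> Gr x0 p \<ge> 0"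
  using sub0 unfolding Gr_def by blast

lemma super: "xl < x1 \<Longrightarrow> 0 < d \<Longrightarrow>
      (\<And>x. xl \<le> x \<Longrightarrow> \<bar>x - x1\<bar> < d \<Longrightarrow> f x - (A + B*x + C*x^2) \<ge> f x1 - (A + B*x1 + C*x1^2)) \<Longrightarrow>
      0 \<le> B + 2*C*x1 \<Longrightarrow> Gr x1 (B + 2*C*x1) \<le> 0"
  using super0[of x1 d A B C] unfolding Gr_def by blast

lemma slope: assumes "xl \<le> x" "x < y" "y < z" shows "s x z \<le> s x y" "s y z \<le> s x z"
proof -
  have cv: "convex_on {xl..} (\<lambda>x. - f x)" using conc by (simp add: concave_on_def)
  have 1: "(- f x - - f y) / (x - y) \<le> (- f x - - f z) / (x - z)"
   and 2: "(- f x - - f z) / (x - z) \<le> (- f y - - f z) / (y - z)"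
    using convex_on_slope_le[OF cv, of x z y] assms by auto
  have e1: "(- f x - - f y) / (x - y) = - s x y" unfolding s_def using assms by (simp add: field_simps)
  have e2: "(- f x - - f z) / (x - z) = - s x z" unfolding s_def using assms by (simp add: field_simps)
  have e3: "(- f y - - f z) / (y - z) = - s y z" unfolding s_def using assms by (simp add: field_simps)
  show "s x z \<le> s x y" using 1 e1 e2 by simp
  show "s y z \<le> s x z" using 2 e2 e3 by simp
qed

lemma fbound: obtains M where "\<And>x. x \<ge> xl \<Longrightarrow> \<bar>f x\<bar> \<le> M"
  using bddf unfolding bounded_iff by (auto simp: real_norm_def)

lemma gbound: obtains M where "\<And>x. x \<ge> xl \<Longrightarrow> \<bar>g x\<bar> \<le> M"
  using bddg unfolding bounded_iff by (auto simp: real_norm_def)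

lemma mono: assumes "xl \<le> x" "x < y" shows "f x \<le> f y"
proof (rule ccontr)
  assume "\<not> f x \<le> f y"
  hence m: "s x y < 0" unfolding s_def using assms by (simp add: divide_neg_pos)
  obtain M where M: "\<And>x. x \<ge> xl \<Longrightarrow> \<bar>f x\<bar> \<le> M" using fbound by blast
  define z where "z = y + (2*M+1) / (- s x y)"
  have M0: "M \<ge> 0" using M[of x] assms by simp
  have "(2*M+1) / (- s x y) > 0" using m M0 by (intro divide_pos_pos) auto
  hence zy: "z > y" unfolding z_def by simp
  have "s x z \<le> s x y" using slope(1)[OF assms zy] .
  hence "f z - f x \<le> s x y * (z - x)" unfolding s_def using assms zy by (simp add: divide_le_eq)
  also have "\<dots> \<le> s x y * (z - y)" using m assms by (simp add: mult_left_mono_neg)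
  also have "\<dots> = - (2*M+1)" unfolding z_def using m by (simp add: field_simps)
  finally have "f z - f x \<le> - (2*M+1)" .
  moreover have "\<bar>f z\<bar> \<le> M" "\<bar>f x\<bar> \<le> M" using M assms zy by auto
  ultimately show False by linarith
qed

lemma s_nonneg: "xl \<le> x \<Longrightarrow> x < y \<Longrightarrow> 0 \<le> s x y"
  using mono[of x y] unfolding s_def by simp

lemma touch: assumes "xl < c" "c < d"
  shows "\<exists>x1 B C. c < x1 \<and> x1 < d \<and> (\<forall>x\<in>{c..d}. f x - (B*x + C*x^2) \<ge> f x1 - (B*x1 + C*x1^2))"
proof -
  define m where "m = s c d"
  define mid where "mid = (c + d) / 2"
  define w where "w = f mid - f c - m*(mid - c)"
  define K where "K = 4*(\<bar>w\<bar>+1)/(d-c)^2"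
  define h where "h x = f x - (f c + m*(x-c) + K*(x-c)*(d-x))" for x
  have cont: "continuous_on {c..d} h" unfolding h_def
    by (intro continuous_intros continuous_on_subset[OF contf]) (use assms in auto)
  obtain x1 where x1: "x1 \<in> {c..d}" "\<And>y. y \<in> {c..d} \<Longrightarrow> h x1 \<le> h y"
    using continuous_attains_inf[OF compact_Icc _ cont] assms by auto
  have hc: "h c = 0" unfolding h_def by simp
  have hd: "h d = 0" unfolding h_def m_def s_def using assms by (simp add: field_simps)
  have e: "(mid-c)*(d-mid) = (d-c)^2/4" unfolding mid_def by (simp add: power2_eq_square field_simps)
  have "K*(mid-c)*(d-mid) = 4*(\<bar>w\<bar>+1)/(d-c)^2 * ((d-c)^2/4)" using e unfolding K_def by (simp add: mult.assoc)
  also have "\<dots> = \<bar>w\<bar>+1" using assms by simp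
  finally have "K*(mid-c)*(d-mid) = \<bar>w\<bar>+1" .
  hence hm: "h mid < 0" unfolding h_def w_def by (smt (verit))
  have "mid \<in> {c..d}" unfolding mid_def using assms by auto
  hence "h x1 < 0" using x1(2) hm by force
  hence x1i: "c < x1" "x1 < d" using x1(1) hc hd by (auto simp: less_eq_real_def)
  define A where "A = f c - m*c - K*c*d"
  define B where "B = m + K*(c+d)"
  define C where "C = - K"
  have eq: "f x - (B*x + C*x^2) = h x + A" for x
    unfolding h_def A_def B_def C_def by (simp add: algebra_simps power2_eq_square)
  show ?thesis
    by (rule exI[of _ x1], rule exI[of _ B], rule exI[of _ C]) (use x1i x1 eq in auto)
qed

lemma touch_slope:
  assumes "xl \<le> c" "c < x1" "x1 < d" and mn: "\<forall>x\<in>{c..d}. f x - (B*x + C*x^2) \<ge> f x1 - (B*x1 + C*x1^2)"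
  shows "\<And>d'. x1 < d' \<Longrightarrow> s x1 d' \<le> B + 2*C*x1"
    and "\<And>c'. xl \<le> c' \<Longrightarrow> c' < x1 \<Longrightarrow> B + 2*C*x1 \<le> s c' x1"
proof -
  fix d' assume d': "x1 < d'"
  have ev: "eventually (\<lambda>x. s x1 d' \<le> B + C*(x+x1)) (at_left x1)"
    unfolding eventually_at_left_field
  proof (intro exI[of _ c] conjI allI impI)
    show "c < x1" by fact
    fix x assume x: "c < x" "x < x1"
    have "f x - (B*x + C*x^2) \<ge> f x1 - (B*x1 + C*x1^2)" using mn x assms by auto
    hence "f x1 - f x \<le> (x1 - x) * (B + C*(x+x1))" by (simp add: algebra_simps power2_eq_square)
    hence 1: "s x x1 \<le> B + C*(x+x1)" unfolding s_def using x by (simp add: divide_le_eq mult.commute)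
    have "s x1 d' \<le> s x d'" using slope(2)[of x x1 d'] x assms d' by auto
    also have "\<dots> \<le> s x x1" using slope(1)[of x x1 d'] x assms d' by auto
    finally show "s x1 d' \<le> B + C*(x+x1)" using 1 by simp
  qed
  have lim: "((\<lambda>x. B + C*(x+x1)) \<longlongrightarrow> B + C*(x1+x1)) (at_left x1)"
    by (intro tendsto_intros)
  have "s x1 d' \<le> B + C*(x1+x1)"
    by (rule tendsto_le[OF trivial_limit_at_left_real lim tendsto_const ev])
  thus "s x1 d' \<le> B + 2*C*x1" by (simp add: algebra_simps)
next
  fix c' assume c': "xl \<le> c'" "c' < x1"
  have ev: "eventually (\<lambda>x. B + C*(x+x1) \<le> s c' x1) (at_right x1)"
    unfolding eventually_at_right_field
  proof (intro exI[of _ d] conjI allI impI)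
    show "x1 < d" by fact
    fix x assume x: "x1 < x" "x < d"
    have "f x - (B*x + C*x^2) \<ge> f x1 - (B*x1 + C*x1^2)" using mn x assms by auto
    hence "f x - f x1 \<ge> (x - x1) * (B + C*(x+x1))" by (simp add: algebra_simps power2_eq_square)
    hence 1: "s x1 x \<ge> B + C*(x+x1)" unfolding s_def using x by (simp add: le_divide_eq mult.commute)
    have "s x1 x \<le> s c' x" using slope(2)[of c' x1 x] x c' by auto
    also have "\<dots> \<le> s c' x1" using slope(1)[of c' x1 x] x c' by auto
    finally show "B + C*(x+x1) \<le> s c' x1" using 1 by simp
  qed
  have lim: "((\<lambda>x. B + C*(x+x1)) \<longlongrightarrow> B + C*(x1+x1)) (at_right x1)"
    by (intro tendsto_intros)
  have "B + C*(x1+x1) \<le> s c' x1"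
    by (rule tendsto_le[OF trivial_limit_at_right_real tendsto_const lim ev])
  thus "B + 2*C*x1 \<le> s c' x1" by (simp add: algebra_simps)
qed

lemma TS: assumes "xl < c" "c < d"
  shows "\<exists>x1 q. c < x1 \<and> x1 < d \<and> Gr x1 q \<le> 0 \<and> 0 \<le> q \<and> (\<forall>d'>x1. s x1 d' \<le> q)
             \<and> (\<forall>c'. xl \<le> c' \<longrightarrow> c' < x1 \<longrightarrow> q \<le> s c' x1)"
proof -
  obtain x1 B C where x1: "c < x1" "x1 < d"
    and mn: "\<forall>x\<in>{c..d}. f x - (B*x + C*x^2) \<ge> f x1 - (B*x1 + C*x1^2)"
    using touch[OF assms] by blast
  note ts = touch_slope[of c x1 d B C]
  have up: "\<forall>d'>x1. s x1 d' \<le> B + 2*C*x1" using ts(1) x1 mn assms by auto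
  have lo: "\<forall>c'. xl \<le> c' \<longrightarrow> c' < x1 \<longrightarrow> B + 2*C*x1 \<le> s c' x1" using ts(2) x1 mn assms by auto
  have q0: "0 \<le> B + 2*C*x1" using up[rule_format, of d] s_nonneg[of x1 d] x1 assms by auto
  have "Gr x1 (0 + B*x1 + C*x1^2 - (0 + B*x1 + C*x1^2) + (B + 2*C*x1)) \<le> 0"
    using super[of x1 "min (x1-c) (d-x1)" 0 B C] x1 assms mn q0 by (auto simp: abs_less_iff)
  hence "Gr x1 (B + 2*C*x1) \<le> 0" by simp
  thus ?thesis using x1 up lo q0 by blast
qed


lemma fright: "xl \<le> x0 \<Longrightarrow> (f \<longlongrightarrow> f x0) (at_right x0)"
proof -
  assume a: "xl \<le> x0"
  have "(f \<longlongrightarrow> f x0) (at x0 within {xl..})" using contf a by (simp add: continuous_on_def)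
  thus ?thesis by (rule tendsto_within_subset) (use a in auto)
qed

lemma gcont: "xl < x0 \<Longrightarrow> isCont g x0" "xl < x0 \<Longrightarrow> isCont f x0"
proof -
  assume a: "xl < x0"
  have "x0 \<in> interior {xl..}" using a by simp
  thus "isCont g x0" "isCont f x0" using contg contf
    by (auto simp: continuous_on_interior)
qed
lemma fleft: "xl < x0 \<Longrightarrow> (f \<longlongrightarrow> f x0) (at_left x0)"
proof -
  assume a: "xl < x0"
  have "(f \<longlongrightarrow> f x0) (at x0)" using gcont(2)[OF a] by (simp add: isCont_def)
  thus ?thesis by (rule tendsto_within_subset) auto
qed

lemma Cbound: obtains Cb where "\<And>x. x \<ge> xl \<Longrightarrow> \<bar>lm*(g x - f x) - rho * f x\<bar> \<le> Cb"
proof -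
  obtain Mf where Mf: "\<And>x. x \<ge> xl \<Longrightarrow> \<bar>f x\<bar> \<le> Mf" using fbound by blast
  obtain Mg where Mg: "\<And>x. x \<ge> xl \<Longrightarrow> \<bar>g x\<bar> \<le> Mg" using gbound by blast
  have "\<bar>lm*(g x - f x) - rho * f x\<bar> \<le> \<bar>lm\<bar>*(Mg+Mf) + \<bar>rho\<bar>*Mf" if "x \<ge> xl" for x
  proof -
    have "\<bar>lm*(g x - f x) - rho * f x\<bar> \<le> \<bar>lm\<bar>*\<bar>g x - f x\<bar> + \<bar>rho\<bar> * \<bar>f x\<bar>"
      by (simp add: abs_mult[symmetric] abs_triangle_ineq4)
    also have "\<dots> \<le> \<bar>lm\<bar>*(Mg+Mf) + \<bar>rho\<bar>*Mf"
      using Mf[OF that] Mg[OF that]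
      by (intro add_mono mult_left_mono) auto
    finally show ?thesis .
  qed
  thus ?thesis using that by blast
qed

lemma bdd_xl: "\<exists>L. \<forall>t>xl. s xl t \<le> L"
proof (rule ccontr)
  assume nb: "\<not> ?thesis"
  define \<kappa> where "\<kappa> = (r*xl+Y)/2"
  have kp: "\<kappa> > 0" unfolding \<kappa>_def using posxl by simp
  define \<eta> where "\<eta> = \<kappa>/(\<bar>r\<bar>+1)"
  have etap: "\<eta> > 0" unfolding \<eta>_def using kp by simp
  have rle: "\<bar>r\<bar>*\<eta> \<le> \<kappa>" unfolding \<eta>_def using kp by (simp add: field_simps)
  have rxY: "r*x + Y \<ge> \<kappa>" if "xl \<le> x" "x \<le> xl + \<eta>" for x
  proof -
    have "\<bar>r*(x - xl)\<bar> \<le> \<bar>r\<bar>*\<eta>" using that by (simp add: abs_mult mult_left_mono)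
    hence "r*(x-xl) \<ge> - \<kappa>" using rle by linarith
    moreover have "r*(x-xl) = r*x - r*xl" by (simp add: algebra_simps)
    ultimately show ?thesis unfolding \<kappa>_def by argo
  qed
  obtain Cb where Cb: "\<And>x. x \<ge> xl \<Longrightarrow> \<bar>lm*(g x - f x) - rho * f x\<bar> \<le> Cb" using Cbound by blast
  have e1: "eventually (\<lambda>q::real. q powr (al-1) < \<kappa>/(-2*k)) at_top"
    using tendsto_neg_powr[of "al-1" "\<lambda>q. q" at_top] alt1 kp kneg filterlim_ident
    by (intro order_tendstoD(2)) (auto intro!: divide_pos_neg)
  have e2: "eventually (\<lambda>q::real. q > max 0 (2*(Cb+1)/\<kappa>)) at_top" by (rule eventually_gt_at_top)
  obtain q0 where q0: "\<And>q. q \<ge> q0 \<Longrightarrow> q powr (al-1) < \<kappa>/(-2*k) \<and> q > max 0 (2*(Cb+1)/\<kappa>)"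
    using eventually_conj[OF e1 e2] unfolding eventually_at_top_linorder by blast
  have Gpos: "Gr x q > 0" if x: "xl \<le> x" "x \<le> xl + \<eta>" and q: "q \<ge> q0" for x q
  proof -
    have qq: "q powr (al-1) < \<kappa>/(-2*k)" "q > 0" "q > 2*(Cb+1)/\<kappa>" using q0[OF q] by auto
    have "q * q powr (al-1) = q powr 1 * q powr (al-1)" using qq by simp
    also have "\<dots> = q powr (1 + (al-1))" by (rule powr_add[symmetric])
    also have "\<dots> = q powr al" by simp
    finally have pe: "q powr al = q * q powr (al-1)" by simp
    have "k * (q * q powr (al-1)) \<ge> k * (q * (\<kappa>/(-2*k)))"
      using qq kneg by (intro mult_left_mono_neg mult_left_mono) auto
    also have "k * (q * (\<kappa>/(-2*k))) = - \<kappa>*q/2" using kneg by (simp add: field_simps)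
    finally have kq: "k * q powr al \<ge> - \<kappa>*q/2" using pe by simp
    have "(r*x+Y)*q \<ge> \<kappa>*q" using rxY[OF x] qq by (simp add: mult_right_mono)
    moreover have "lm*(g x - f x) - rho * f x \<ge> - Cb" using Cb[OF x(1)] by linarith
    moreover have "\<kappa>*q/2 > Cb + 1" using qq kp by (simp add: field_simps)
    ultimately show ?thesis unfolding Gr_def using kq by linarith
  qed
  obtain t1 where t1: "t1 > xl" "s xl t1 > q0" using nb by (meson not_le)
  define t' where "t' = min t1 (xl+\<eta>)"
  have t'1: "t' > xl" "t' \<le> xl + \<eta>" unfolding t'_def using t1 etap by auto
  have st': "s xl t' > q0"
  proof (cases "t' < t1")
    case True thus ?thesis using slope(1)[of xl t' t1] t1 t'1 by auto
  next
    case False hence "t' = t1" unfolding t'_def by auto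
    thus ?thesis using t1 by simp
  qed
  have fl: "(f \<longlongrightarrow> f xl) (at_right xl)"
    by (rule fright) simp
  have lim: "((\<lambda>t. s t t') \<longlongrightarrow> s xl t') (at_right xl)"
    unfolding s_def using t'1 by (intro tendsto_intros fl) auto
  have ev2: "eventually (\<lambda>t. t < t') (at_right xl)" unfolding eventually_at_right_field using t'1 by blast
  have "eventually (\<lambda>t. s t t' > q0 \<and> t < t') (at_right xl)"
    using order_tendstoD(1)[OF lim st'] ev2 by (rule eventually_conj)
  then obtain b where b: "b > xl" "\<And>y. y > xl \<Longrightarrow> y < b \<Longrightarrow> s y t' > q0 \<and> y < t'"
    unfolding eventually_at_right_field by blast
  define t0 where "t0 = (xl + b)/2"
  have t0: "xl < t0" "t0 < t'" "s t0 t' > q0" using b(2)[of t0] b(1) unfolding t0_def by auto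
  obtain x1 q where x1: "(xl+t0)/2 < x1" "x1 < t0" "Gr x1 q \<le> 0" "\<forall>d'>x1. s x1 d' \<le> q"
    using TS[of "(xl+t0)/2" t0] t0 by auto
  have "s t0 t' \<le> s x1 t'" using slope(2)[of x1 t0 t'] x1 t0 by auto
  moreover have "s x1 t' \<le> q" using x1(4) x1(2) t0(2) by simp
  ultimately have "q \<ge> q0" using t0(3) by linarith
  moreover have "xl \<le> x1" "x1 \<le> xl + \<eta>" using x1 t0 t'1 by auto
  ultimately show False using Gpos x1(3) by force
qed

definition Dp where "Dp x = Sup ((\<lambda>t. s x t) ` {x<..})"
definition Dm where "Dm x = Inf ((\<lambda>t. s t x) ` {xl..<x})"

lemma bddDp: assumes "xl \<le> x" shows "bdd_above ((\<lambda>t. s x t) ` {x<..})"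
proof -
  obtain L where L: "\<And>t. t > xl \<Longrightarrow> s xl t \<le> L" using bdd_xl by blast
  have "s x t \<le> L" if "t > x" for t
  proof (cases "x = xl")
    case True thus ?thesis using L that by simp
  next
    case False
    hence "s x t \<le> s xl t" using slope(2)[of xl x t] assms that by auto
    thus ?thesis using L[of t] that assms by simp
  qed
  thus ?thesis by (intro bdd_aboveI2) auto
qed

lemma Dp_ge: "xl \<le> x \<Longrightarrow> x < t \<Longrightarrow> s x t \<le> Dp x"
  unfolding Dp_def by (rule cSup_upper) (use bddDp in auto)

lemma Dp_approx: assumes "xl \<le> x" "e > 0" shows "\<exists>t>x. Dp x - e < s x t"
proof -
  have "Dp x - e < Dp x" using assms by simp
  hence "\<exists>y\<in>(\<lambda>t. s x t) ` {x<..}. Dp x - e < y" unfolding Dp_def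
    using less_cSup_iff[of "(\<lambda>t. s x t) ` {x<..}"] bddDp[OF assms(1)]
    by (metis Dp_def empty_is_image greaterThan_non_empty)
  thus ?thesis by auto
qed

lemma Dp_nonneg: "xl \<le> x \<Longrightarrow> 0 \<le> Dp x"
  using Dp_ge[of x "x+1"] s_nonneg[of x "x+1"] by simp

lemma bddDm: "bdd_below ((\<lambda>t. s t x) ` {xl..<x})"
  by (intro bdd_belowI2[of _ 0]) (auto intro: s_nonneg)

lemma Dm_le: "xl \<le> t \<Longrightarrow> t < x \<Longrightarrow> Dm x \<le> s t x"
  unfolding Dm_def by (rule cInf_lower) (use bddDm in auto)

lemma Dm_approx: assumes "xl < x" "e > 0" shows "\<exists>t. xl \<le> t \<and> t < x \<and> s t x < Dm x + e"
proof -
  have ne: "(\<lambda>t. s t x) ` {xl..<x} \<noteq> {}" using assms by auto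
  have "Inf ((\<lambda>t. s t x) ` {xl..<x}) < Dm x + e" unfolding Dm_def using assms by simp
  hence "\<exists>y\<in>(\<lambda>t. s t x) ` {xl..<x}. y < Dm x + e"
    using cInf_less_iff[OF ne bddDm] by blast
  thus ?thesis by auto
qed

lemma Dp_le_Dm: assumes "xl < x" shows "Dp x \<le> Dm x"
proof -
  have "s x t' \<le> Dm x" if "t' > x" for t'
  proof -
    have "s x t' \<le> s t x" if "xl \<le> t" "t < x" for t
      using slope(1)[of t x t'] slope(2)[of t x t'] that \<open>t' > x\<close> by auto
    thus ?thesis unfolding Dm_def using assms by (intro cInf_greatest) auto
  qed
  thus ?thesis unfolding Dp_def by (intro cSup_least) auto
qed

lemma Dp_right: assumes "xl \<le> x0" "e > 0"
  shows "\<exists>d>0. \<forall>t. x0 < t \<longrightarrow> t < x0 + d \<longrightarrow> Dp x0 - e < s x0 t \<and> s x0 t \<le> Dp x0"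
proof -
  obtain te where te: "te > x0" "Dp x0 - e < s x0 te" using Dp_approx[OF assms] by blast
  show ?thesis
  proof (intro exI[of _ "te - x0"] conjI allI impI)
    fix t assume t: "x0 < t" "t < x0 + (te - x0)"
    show "s x0 t \<le> Dp x0" using Dp_ge assms t by auto
    show "Dp x0 - e < s x0 t" using slope(1)[of x0 t te] te t assms by auto
  qed (use te in auto)
qed

lemma Dm_left: assumes "xl < x0" "e > 0"
  shows "\<exists>d>0. \<forall>t. x0 - d < t \<longrightarrow> t < x0 \<longrightarrow> Dm x0 \<le> s t x0 \<and> s t x0 < Dm x0 + e"
proof -
  obtain te where te: "xl \<le> te" "te < x0" "s te x0 < Dm x0 + e" using Dm_approx[OF assms] by blast
  show ?thesis
  proof (intro exI[of _ "x0 - te"] conjI allI impI)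
    fix t assume t: "x0 - (x0 - te) < t" "t < x0"
    show "Dm x0 \<le> s t x0" using Dm_le te t by auto
    show "s t x0 < Dm x0 + e" using slope(2)[of te t x0] te t by auto
  qed (use te in auto)
qed

lemma seq_lim: assumes "\<And>n. \<bar>X n - x0\<bar> < inverse (real (Suc n))" shows "X \<longlonglongrightarrow> x0"
proof (rule LIMSEQ_I)
  fix e :: real assume e: "0 < e"
  obtain N where N: "inverse (real (Suc N)) < e" using reals_Archimedean[OF e] by blast
  have "norm (X n - x0) < e" if "n \<ge> N" for n
  proof -
    have a: "inverse (real (Suc n)) \<le> inverse (real (Suc N))" using that by (simp add: field_simps)
    have "\<bar>X n - x0\<bar> < e" using assms[of n] a N by linarith
    thus ?thesis by simp
  qed
  thus "\<exists>no. \<forall>n\<ge>no. norm (X n - x0) < e" by blast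
qed

lemma Gr_closed: assumes "xl < x0" "0 \<le> p"
  and H: "\<And>e. e > 0 \<Longrightarrow> \<exists>x1 q. xl < x1 \<and> \<bar>x1 - x0\<bar> < e \<and> \<bar>q - p\<bar> < e \<and> 0 \<le> q \<and> Gr x1 q \<le> 0"
  shows "Gr x0 p \<le> 0"
proof -
  have "\<forall>n. \<exists>x1 q. xl < x1 \<and> \<bar>x1 - x0\<bar> < inverse (real (Suc n)) \<and> \<bar>q - p\<bar> < inverse (real (Suc n))
      \<and> 0 \<le> q \<and> Gr x1 q \<le> 0" using H by simp
  then obtain X Q where XQ: "\<And>n. xl < X n \<and> \<bar>X n - x0\<bar> < inverse (real (Suc n)) \<and> \<bar>Q n - p\<bar> < inverse (real (Suc n))
      \<and> 0 \<le> Q n \<and> Gr (X n) (Q n) \<le> 0" by metis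
  have X: "X \<longlonglongrightarrow> x0" by (rule seq_lim) (use XQ in auto)
  have Q: "Q \<longlonglongrightarrow> p" by (rule seq_lim) (use XQ in auto)
  have gl: "(\<lambda>n. g (X n)) \<longlonglongrightarrow> g x0" by (rule isCont_tendsto_compose[OF gcont(1)[OF assms(1)] X])
  have fl: "(\<lambda>n. f (X n)) \<longlonglongrightarrow> f x0" by (rule isCont_tendsto_compose[OF gcont(2)[OF assms(1)] X])
  have pw: "(\<lambda>n. Q n powr al) \<longlonglongrightarrow> p powr al"
    by (rule tendsto_powr'[OF Q tendsto_const]) (use XQ apos in \<open>auto intro: always_eventually\<close>)
  have "(\<lambda>n. Gr (X n) (Q n)) \<longlonglongrightarrow> Gr x0 p"
    unfolding Gr_def by (intro tendsto_intros X Q gl fl pw)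
  thus ?thesis by (rule LIMSEQ_le_const2) (use XQ in auto)
qed

lemma left_approx: assumes x0: "xl < x0" and e: "e > 0"
  shows "\<exists>x1 q. xl < x1 \<and> \<bar>x1 - x0\<bar> < e \<and> \<bar>q - Dm x0\<bar> < e \<and> 0 \<le> q \<and> Gr x1 q \<le> 0"
proof -
  define b where "b = Dm x0"
  define e' where "e' = e/4"
  have e': "e' > 0" unfolding e'_def using e by simp
  obtain d0 where d0: "d0 > 0" "\<And>t. x0 - d0 < t \<Longrightarrow> t < x0 \<Longrightarrow> b \<le> s t x0 \<and> s t x0 < b + e'"
    using Dm_left[OF x0 e'] unfolding b_def by blast
  define d where "d = min (min (d0/3) (e/2)) ((x0-xl)/3)"
  have dd: "d \<le> d0/3" "d \<le> e/2" "d \<le> (x0-xl)/3" unfolding d_def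
    by (meson min.cobounded1 min.cobounded2 order_trans)+
  have "d > 0" unfolding d_def using d0 e x0 by simp
  hence d: "d > 0" "3*d \<le> d0" "2*d \<le> e" "3*d \<le> x0 - xl" using dd by auto
  define c' where "c' = x0 - 2*d"
  obtain x1 q where x1: "x0 - d < x1" "x1 < x0 - d/2" "Gr x1 q \<le> 0" "0 \<le> q"
     "\<forall>d'>x1. s x1 d' \<le> q" "\<forall>c'. xl \<le> c' \<longrightarrow> c' < x1 \<longrightarrow> q \<le> s c' x1"
    using TS[of "x0 - d" "x0 - d/2"] d by auto
  have c'x: "xl \<le> c'" "c' < x1" unfolding c'_def using d x1 by auto
  have "x1 < x0" using x1(2) d by simp
  hence "s x1 x0 \<le> q" using x1(5) by auto
  moreover have "x0 - d0 < x1" using x1(1) d by linarith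
  ultimately have qlow: "b \<le> q" using d0(2)[of x1] \<open>x1 < x0\<close> by force
  define D1 where "D1 = x0 - x1"
  define S1 where "S1 = s c' x0"
  define S2 where "S2 = s x1 x0"
  have D1: "d/2 < D1" "D1 < d" unfolding D1_def using x1 by auto
  have S1: "b \<le> S1" "S1 < b + e'" unfolding S1_def c'_def using d0(2)[of "x0 - 2*d"] d by auto
  have S2: "b \<le> S2" unfolding S2_def using d0(2)[of x1] x1 d by auto
  have f1: "f x0 - f c' = S1 * (2*d)" unfolding S1_def s_def c'_def using d by simp
  have f2: "f x0 - f x1 = S2 * D1" unfolding S2_def s_def D1_def using x1 d by simp
  have x1c: "x1 - c' = 2*d - D1" unfolding c'_def D1_def by simp
  have i1: "2*d*(S1 - b) \<le> 2*d*e'" using S1 d by (intro mult_left_mono) auto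
  have i2: "D1*(S2 - b) \<ge> 0" using S2 D1 d by simp
  have i3: "2*d*e' \<le> 2*e'*(2*d - D1)" using e' D1 by (simp add: mult_left_mono)
  have id: "2*d*S1 - D1*S2 - (b+2*e')*(2*d - D1) = 2*d*(S1-b) - D1*(S2-b) - 2*e'*(2*d-D1)"
    by (simp add: algebra_simps)
  have n1: "f x1 - f c' = 2*d*S1 - D1*S2" using f1 f2 by (simp add: algebra_simps)
  have n2: "(b+2*e')*(x1 - c') = (b+2*e')*(2*d - D1)" using x1c by simp
  have num: "f x1 - f c' \<le> (b+2*e')*(x1 - c')" unfolding n1 n2 by (rule lin4b[OF id i1 i2 i3])
  have "s c' x1 \<le> b + 2*e'" unfolding s_def using num c'x by (simp add: pos_divide_le_eq)
  hence "q \<le> b + 2*e'" using x1(6) c'x by fastforce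
  hence "\<bar>q - b\<bar> < e" using qlow e' unfolding e'_def by simp
  moreover have "\<bar>x1 - x0\<bar> < e" using x1 d by simp
  moreover have "xl < x1" using x1 d by simp
  ultimately show ?thesis using x1 unfolding b_def by blast
qed

lemma right_approx: assumes x0: "xl < x0" and e: "e > 0"
  shows "\<exists>x1 q. xl < x1 \<and> \<bar>x1 - x0\<bar> < e \<and> \<bar>q - Dp x0\<bar> < e \<and> 0 \<le> q \<and> Gr x1 q \<le> 0"
proof -
  define a where "a = Dp x0"
  define e' where "e' = e/4"
  have e': "e' > 0" unfolding e'_def using e by simp
  obtain d0 where d0: "d0 > 0" "\<And>t. x0 < t \<Longrightarrow> t < x0 + d0 \<Longrightarrow> a - e' < s x0 t \<and> s x0 t \<le> a"
    using Dp_right[of x0 e'] x0 e' unfolding a_def by auto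
  define d where "d = min (d0/3) (e/2)"
  have d: "d > 0" "3*d \<le> d0" "2*d \<le> e" unfolding d_def using d0 e x0 by auto
  define d' where "d' = x0 + 2*d"
  obtain x1 q where x1: "x0 + d/2 < x1" "x1 < x0 + d" "Gr x1 q \<le> 0" "0 \<le> q"
     "\<forall>d'>x1. s x1 d' \<le> q" "\<forall>c'. xl \<le> c' \<longrightarrow> c' < x1 \<longrightarrow> q \<le> s c' x1"
    using TS[of "x0 + d/2" "x0 + d"] d x0 by auto
  have "x0 < x1" using x1(1) d by simp
  hence "q \<le> s x0 x1" using x1(6) x0 by auto
  hence qup: "q \<le> a" using d0(2)[of x1] x1 d \<open>x0 < x1\<close> by force
  define D1 where "D1 = x1 - x0"
  define S1 where "S1 = s x0 d'"
  define S2 where "S2 = s x0 x1"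
  have D1: "d/2 < D1" "D1 < d" unfolding D1_def using x1 by auto
  have S1: "a - e' < S1" "S1 \<le> a" unfolding S1_def d'_def using d0(2)[of "x0 + 2*d"] d by auto
  have S2: "S2 \<le> a" unfolding S2_def using d0(2)[of x1] x1 d by auto
  have f1: "f d' - f x0 = S1 * (2*d)" unfolding S1_def s_def d'_def using d by simp
  have f2: "f x1 - f x0 = S2 * D1" unfolding S2_def s_def D1_def using x1 d by simp
  have x1c: "d' - x1 = 2*d - D1" unfolding d'_def D1_def by simp
  have "2*d*(-e') \<le> 2*d*(S1 - a)" using S1 d by (intro mult_left_mono) auto
  hence i1: "2*d*(S1 - a) \<ge> - (2*d*e')" by simp
  have i2: "D1*(S2 - a) \<le> 0" using S2 D1 d by (simp add: mult_nonneg_nonpos)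
  have i3: "2*d*e' \<le> 2*e'*(2*d - D1)" using e' D1 by (simp add: mult_left_mono)
  have id: "2*d*S1 - D1*S2 - (a-2*e')*(2*d - D1) = 2*d*(S1-a) - D1*(S2-a) + 2*e'*(2*d-D1)"
    by (simp add: algebra_simps)
  have n1: "f d' - f x1 = 2*d*S1 - D1*S2" using f1 f2 by (simp add: algebra_simps)
  have n2: "(a-2*e')*(d' - x1) = (a-2*e')*(2*d - D1)" using x1c by simp
  have num: "f d' - f x1 \<ge> (a-2*e')*(d' - x1)" unfolding n1 n2 by (rule lin4a[OF id i1 i2 i3])
  have "s x1 d' \<ge> a - 2*e'" unfolding s_def using num x1c D1 by (simp add: pos_le_divide_eq)
  moreover have "s x1 d' \<le> q" using x1(5) x1c D1 by auto
  ultimately have "q \<ge> a - 2*e'" by simp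
  hence "\<bar>q - a\<bar> < e" using qup e' unfolding e'_def by simp
  moreover have "\<bar>x1 - x0\<bar> < e" using x1 d by simp
  moreover have "xl < x1" using x1 d x0 by simp
  ultimately show ?thesis using x1 unfolding a_def by blast
qed

lemma nokink: assumes x0: "xl < x0" shows "Dp x0 = Dm x0"
proof (rule ccontr)
  assume ne: "Dp x0 \<noteq> Dm x0"
  define a where "a = Dp x0"
  define b where "b = Dm x0"
  have ab: "0 \<le> a" "a < b" using Dp_le_Dm[OF x0] Dp_nonneg[of x0] x0 ne unfolding a_def b_def by auto
  define p where "p = (a+b)/2"
  have Gp: "Gr x0 p \<ge> 0"
  proof (rule sub)
    show "xl \<le> x0" "0 \<le> p" using x0 ab unfolding p_def by auto
    fix x assume x: "xl \<le> x"
    consider "x < x0" | "x = x0" | "x > x0" by linarith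
    thus "f x \<le> f x0 + p * (x - x0)"
    proof cases
      case 1
      have "b \<le> s x x0" unfolding b_def using Dm_le x 1 by auto
      hence "p \<le> s x x0" using ab unfolding p_def by simp
      hence "p * (x0 - x) \<le> f x0 - f x" unfolding s_def using 1 by (simp add: le_divide_eq)
      thus ?thesis by (simp add: algebra_simps)
    next
      case 3
      have "s x0 x \<le> a" unfolding a_def using Dp_ge x0 3 by auto
      hence "s x0 x \<le> p" using ab unfolding p_def by simp
      hence "f x - f x0 \<le> p * (x - x0)" unfolding s_def using 3 by (simp add: divide_le_eq)
      thus ?thesis by (simp add: algebra_simps)
    qed simp
  qed
  have Ga: "Gr x0 a \<le> 0" using Gr_closed[OF x0 ab(1)] right_approx[OF x0] unfolding a_def by blast
  have Gb: "Gr x0 b \<le> 0" using Gr_closed[OF x0] left_approx[OF x0] ab unfolding b_def by auto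
  have pm: "a powr al + b powr al < 2 * p powr al" unfolding p_def by (rule powr_mid_strict) (use ab apos alt1 in auto)
  have "k * (a powr al + b powr al) > k * (2 * p powr al)" using pm kneg by simp
  moreover have "Gr x0 a + Gr x0 b - 2 * Gr x0 p = k * (a powr al + b powr al) - k * (2 * p powr al)"
    unfolding Gr_def p_def by (simp add: algebra_simps)
  ultimately show False using Ga Gb Gp by linarith
qed

lemma diff: assumes x: "xl < x" shows "(f has_real_derivative Dp x) (at x)"
proof -
  have r: "((\<lambda>y. (f y - f x) / (y - x)) \<longlongrightarrow> Dp x) (at_right x)"
  proof (rule helper_right)
    fix e :: real assume e: "e > 0"
    obtain d where d: "d > 0" "\<And>t. x < t \<Longrightarrow> t < x + d \<Longrightarrow> Dp x - e < s x t \<and> s x t \<le> Dp x"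
      using Dp_right[of x e] x e by auto
    show "\<exists>d>0. \<forall>t. x < t \<longrightarrow> t < x + d \<longrightarrow> \<bar>(f t - f x) / (t - x) - Dp x\<bar> < e"
      using d unfolding s_def by (intro exI[of _ d]) force
  qed
  have l: "((\<lambda>y. (f y - f x) / (y - x)) \<longlongrightarrow> Dp x) (at_left x)"
  proof (rule helper_left)
    fix e :: real assume e: "e > 0"
    obtain d where d: "d > 0" "\<And>t. x - d < t \<Longrightarrow> t < x \<Longrightarrow> Dm x \<le> s t x \<and> s t x < Dm x + e"
      using Dm_left[OF x e] by auto
    have q: "(f t - f x) / (t - x) = s t x" for t unfolding s_def
      by (metis minus_diff_eq minus_divide_divide)
    show "\<exists>d>0. \<forall>t. x - d < t \<longrightarrow> t < x \<longrightarrow> \<bar>(f t - f x) / (t - x) - Dp x\<bar> < e"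
      using d nokink[OF x] unfolding q by (intro exI[of _ d]) force
  qed
  show ?thesis unfolding has_field_derivative_iff using l r by (simp add: filterlim_at_split)
qed

lemma Dcont_right: assumes x0: "xl \<le> x0" shows "(Dp \<longlongrightarrow> Dp x0) (at_right x0)"
proof (rule helper_right)
  fix e :: real assume e: "e > 0"
  obtain t where t: "t > x0" "Dp x0 - e/2 < s x0 t" using Dp_approx[of x0 "e/2"] x0 e by auto
  have lim: "((\<lambda>x. s x t) \<longlongrightarrow> s x0 t) (at_right x0)"
    unfolding s_def using t by (intro tendsto_intros fright x0) auto
  have "eventually (\<lambda>x. Dp x0 - e < s x t) (at_right x0)"
    by (rule order_tendstoD(1)[OF lim]) (use t e in auto)
  then obtain b where b: "b > x0" "\<And>y. x0 < y \<Longrightarrow> y < b \<Longrightarrow> Dp x0 - e < s y t"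
    unfolding eventually_at_right_field by blast
  show "\<exists>d>0. \<forall>x. x0 < x \<longrightarrow> x < x0 + d \<longrightarrow> \<bar>Dp x - Dp x0\<bar> < e"
  proof (intro exI[of _ "min b t - x0"] conjI allI impI)
    show "min b t - x0 > 0" using b t by simp
    fix x assume x: "x0 < x" "x < x0 + (min b t - x0)"
    have up: "Dp x \<le> Dp x0"
      using Dp_le_Dm[of x] Dm_le[of x0 x] Dp_ge[of x0 x] x x0 by auto
    have "s x t \<le> Dp x" using Dp_ge[of x t] x x0 by auto
    moreover have "Dp x0 - e < s x t" using b(2)[of x] x by auto
    ultimately show "\<bar>Dp x - Dp x0\<bar> < e" using up by linarith
  qed
qed

lemma Dcont_left: assumes x0: "xl < x0" shows "(Dp \<longlongrightarrow> Dp x0) (at_left x0)"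
proof (rule helper_left)
  fix e :: real assume e: "e > 0"
  obtain t where t: "xl \<le> t" "t < x0" "s t x0 < Dm x0 + e/2" using Dm_approx[of x0 "e/2"] x0 e by auto
  have lim: "((\<lambda>x. s t x) \<longlongrightarrow> s t x0) (at_left x0)"
    unfolding s_def using t by (intro tendsto_intros fleft x0) auto
  have "eventually (\<lambda>x. s t x < Dm x0 + e) (at_left x0)"
    by (rule order_tendstoD(2)[OF lim]) (use t e in auto)
  then obtain b where b: "b < x0" "\<And>y. b < y \<Longrightarrow> y < x0 \<Longrightarrow> s t y < Dm x0 + e"
    unfolding eventually_at_left_field by blast
  show "\<exists>d>0. \<forall>x. x0 - d < x \<longrightarrow> x < x0 \<longrightarrow> \<bar>Dp x - Dp x0\<bar> < e"
  proof (intro exI[of _ "x0 - max b t"] conjI allI impI)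
    show "x0 - max b t > 0" using b t by simp
    fix x assume x: "x0 - (x0 - max b t) < x" "x < x0"
    have xl: "xl < x" using x t by simp
    have lo: "Dp x0 \<le> Dp x"
      using nokink[OF x0] Dm_le[of x x0] Dp_ge[of x x0] x xl by auto
    have "Dp x \<le> s t x" using nokink[OF xl] Dm_le[of t x] t x by auto
    moreover have "s t x < Dm x0 + e" using b(2)[of x] x by auto
    ultimately show "\<bar>Dp x - Dp x0\<bar> < e" using lo nokink[OF x0] by linarith
  qed
qed

lemma main_result:
  shows "(\<forall>x>xl. f differentiable (at x)) \<and> continuous_on {xl<..} (deriv f) \<and>
    (\<exists>L. ((\<lambda>e. (f (xl + e) - f xl) / e) \<longlongrightarrow> L) (at_right 0) \<and>
       (\<forall>R>xl. uniformly_continuous_on {xl..R} (\<lambda>x. if x = xl then L else deriv f x)))"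
proof (intro conjI allI impI exI[of _ "Dp xl"])
  fix x assume "xl < x"
  thus "f differentiable (at x)" using diff real_differentiable_def by blast
next
  have dv: "deriv f x = Dp x" if "xl < x" for x using diff[OF that] by (rule DERIV_imp_deriv)
  have ic: "isCont Dp x" if "xl < x" for x
    unfolding isCont_def using Dcont_left[OF that] Dcont_right[of x] that by (simp add: filterlim_at_split)
  have "continuous_on {xl<..} Dp" by (rule continuous_at_imp_continuous_on) (use ic in auto)
  thus "continuous_on {xl<..} (deriv f)" by (rule continuous_on_cong[THEN iffD1, rotated 2]) (use dv in auto)
next
  show "((\<lambda>e. (f (xl + e) - f xl) / e) \<longlongrightarrow> Dp xl) (at_right 0)"
  proof (rule helper_right)
    fix e :: real assume e: "e > 0"
    obtain d where d: "d > 0" "\<And>t. xl < t \<Longrightarrow> t < xl + d \<Longrightarrow> Dp xl - e < s xl t \<and> s xl t \<le> Dp xl"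
      using Dp_right[of xl e] e by auto
    show "\<exists>d>0. \<forall>t. 0 < t \<longrightarrow> t < 0 + d \<longrightarrow> \<bar>(f (xl + t) - f xl) / t - Dp xl\<bar> < e"
    proof (intro exI[of _ d] conjI allI impI)
      fix t assume t: "0 < t" "t < 0 + d"
      have "(f (xl + t) - f xl) / t = s xl (xl + t)" unfolding s_def by simp
      thus "\<bar>(f (xl + t) - f xl) / t - Dp xl\<bar> < e" using d(2)[of "xl + t"] t by auto
    qed (use d in auto)
  qed
next
  fix R assume R: "xl < R"
  have dv: "deriv f x = Dp x" if "xl < x" for x using diff[OF that] by (rule DERIV_imp_deriv)
  have cD: "continuous_on {xl..R} Dp" unfolding continuous_on_def
  proof
    fix x assume x: "x \<in> {xl..R}"
    show "(Dp \<longlongrightarrow> Dp x) (at x within {xl..R})"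
    proof (cases "x = xl")
      case True thus ?thesis using Dcont_right[of xl] R by (simp add: at_within_Icc_at_right)
    next
      case False
      hence "xl < x" using x by auto
      hence "(Dp \<longlongrightarrow> Dp x) (at x)"
        using Dcont_left[of x] Dcont_right[of x] by (simp add: filterlim_at_split)
      thus ?thesis by (rule tendsto_within_subset) auto
    qed
  qed
  have eD: "\<forall>x\<in>{xl..R}. Dp x = (if x = xl then Dp xl else deriv f x)" using dv by auto
  have "continuous_on {xl..R} (\<lambda>x. if x = xl then Dp xl else deriv f x)"
    by (rule continuous_on_eq[OF cD]) (use eD in auto)
  thus "uniformly_continuous_on {xl..R} (\<lambda>x. if x = xl then Dp xl else deriv f x)"
    by (intro compact_uniformly_continuous) auto
qed

end

lemma quad_has_deriv: "((\<lambda>x::real. A + B*x + C*x^2) has_real_derivative (B + 2*C*x)) (at x)"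
  by (auto intro!: derivative_eq_intros)

lemma quad_deriv: "deriv (\<lambda>x::real. A + B*x + C*x^2) = (\<lambda>x. B + 2*C*x)"
  using quad_has_deriv DERIV_imp_deriv by blast

lemma quad_iter: "\<exists>A' B' C'. (deriv ^^ n) (\<lambda>x::real. A + B*x + C*x^2) = (\<lambda>x. A' + B'*x + C'*x^2)"
proof (induction n arbitrary: A B C)
  case 0 thus ?case by auto
next
  case (Suc n)
  have "(deriv ^^ Suc n) (\<lambda>x::real. A + B*x + C*x^2) = (deriv ^^ n) (deriv (\<lambda>x::real. A + B*x + C*x^2))"
    by (simp add: funpow_Suc_right del: funpow.simps)
  also have "deriv (\<lambda>x::real. A + B*x + C*x^2) = (\<lambda>x. B + (2*C)*x + 0*x^2)"
    unfolding quad_deriv by simp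
  finally show ?case using Suc.IH[of B "2*C" 0] by metis
qed

lemma smooth_quad: "smooth_fun (\<lambda>x::real. A + B*x + C*x^2)"
  unfolding smooth_fun_def
proof (intro allI)
  fix n x
  obtain A' B' C' where e: "(deriv ^^ n) (\<lambda>x::real. A + B*x + C*x^2) = (\<lambda>x. A' + B'*x + C'*x^2)"
    using quad_iter by blast
  show "(deriv ^^ n) (\<lambda>x::real. A + B*x + C*x^2) differentiable (at x)"
    unfolding e using quad_has_deriv real_differentiable_def by blast
qed

lemma Ham_pos: "0 \<le> p \<Longrightarrow> Ham r \<gamma> x y p = ereal ((r * x + y) * p + \<gamma> / (1 - \<gamma>) * p powr (1 - 1 / \<gamma>))"
  unfolding Ham_def by simp

theorem mainTheorem8:
  fixes \<rho> r \<gamma> xl :: real and y lam :: "nat \<Rightarrow> real" and v :: "nat \<Rightarrow> real \<Rightarrow> real"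
  assumes "\<rho> > 0" and "r < \<rho>" and "0 < y 1" and "y 1 < y 2" and "\<gamma> > 1"
    and "xl \<le> 0" and "\<rho> * xl + y 1 > 0" and "\<rho> * xl + y 2 > 0"
    and "lam 1 \<ge> 0" and "lam 2 \<ge> 0"
    and "constrained_visc_sol \<rho> r \<gamma> y lam xl v"
    and "\<forall>j\<in>{1,2}. bounded (v j ` {xl..})"
    and "\<forall>j\<in>{1,2}. concave_on {xl..} (v j)"
  shows "\<forall>j\<in>{1::nat,2}.
           (\<forall>x>xl. v j differentiable (at x)) \<and>
           continuous_on {xl<..} (deriv (v j)) \<and>
           (\<exists>L. ((\<lambda>e. (v j (xl + e) - v j xl) / e) \<longlongrightarrow> L) (at_right 0) \<and>
                (\<forall>R>xl. uniformly_continuous_on {xl..R}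
                          (\<lambda>x. if x = xl then L else deriv (v j) x)))"
proof
  fix j :: nat assume j: "j \<in> {1,2}"
  have j3: "3 - j \<in> {1,2}" using j by auto
  define k where "k = \<gamma> / (1 - \<gamma>)"
  define al where "al = 1 - 1 / \<gamma>"
  have cs: "\<forall>j\<in>{1,2}. continuous_on {xl..} (v j)" "visc_super \<rho> r \<gamma> y lam xl {xl<..} v"
    "visc_sub \<rho> r \<gamma> y lam xl {xl..} v"
    using assms(11) unfolding constrained_visc_sol_def by auto
  have sup: "\<And>\<phi> x0. smooth_fun \<phi> \<Longrightarrow> x0 \<in> {xl<..} \<Longrightarrow> loc_min_rel xl (\<lambda>x. v j x - \<phi> x) x0 \<Longrightarrow>
        ereal (\<rho> * v j x0) \<ge> Ham r \<gamma> x0 (y j) (deriv \<phi> x0) + ereal (lam j * (v (3 - j) x0 - v j x0))"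
    using cs(2) j unfolding visc_super_def by blast
  have sb: "\<And>\<phi> x0. smooth_fun \<phi> \<Longrightarrow> x0 \<in> {xl..} \<Longrightarrow> loc_max_rel xl (\<lambda>x. v j x - \<phi> x) x0 \<Longrightarrow>
        ereal (\<rho> * v j x0) \<le> Ham r \<gamma> x0 (y j) (deriv \<phi> x0) + ereal (lam j * (v (3 - j) x0 - v j x0))"
    using cs(3) j unfolding visc_sub_def by blast
  have "VS xl r (y j) (lam j) \<rho> k al (v j) (v (3 - j))"
  proof
    show "concave_on {xl..} (v j)" using assms(13) j by auto
    show "continuous_on {xl..} (v j)" "continuous_on {xl..} (v (3 - j))" using cs(1) j j3 by auto
    show "bounded (v j ` {xl..})" "bounded (v (3 - j) ` {xl..})" using assms(12) j j3 by auto
    show "k < 0" unfolding k_def using assms(5) by (simp add: divide_pos_neg)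
    show "0 < al" "al < 1" unfolding al_def using assms(5) by auto
    have yj: "\<rho> * xl + y j > 0" using j assms(7,8) by auto
    have "(\<rho> - r) * xl \<le> 0" using assms(2,6) by (simp add: mult_nonneg_nonpos)
    thus "r * xl + y j > 0" using yj by (simp add: algebra_simps)
  next
    fix x0 p assume x0: "xl \<le> x0" and p: "0 \<le> p" and le: "\<forall>x\<ge>xl. v j x \<le> v j x0 + p * (x - x0)"
    define \<phi> where "\<phi> = (\<lambda>x::real. (v j x0 - p*x0) + p*x + 0*x^2)"
    have sm: "smooth_fun \<phi>" unfolding \<phi>_def by (rule smooth_quad)
    have dp: "deriv \<phi> x0 = p" unfolding \<phi>_def quad_deriv by simp
    have lm: "loc_max_rel xl (\<lambda>x. v j x - \<phi> x) x0" unfolding loc_max_rel_def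
      by (rule exI[of _ 1]) (use le in \<open>auto simp: \<phi>_def algebra_simps\<close>)
    have "ereal (\<rho> * v j x0) \<le> Ham r \<gamma> x0 (y j) p + ereal (lam j * (v (3 - j) x0 - v j x0))"
      using sb[OF sm _ lm] x0 dp by auto
    thus "(r*x0 + y j)*p + k*(p powr al) + lam j*(v (3 - j) x0 - v j x0) - \<rho> * v j x0 \<ge> 0"
      unfolding Ham_pos[OF p] k_def al_def by simp
  next
    fix x1 A B C d assume x1: "xl < x1" and d: "0 < d"
      and mn: "\<forall>x. xl \<le> x \<longrightarrow> \<bar>x - x1\<bar> < d \<longrightarrow> v j x - (A + B*x + C*x^2) \<ge> v j x1 - (A + B*x1 + C*x1^2)"
      and q: "0 \<le> B + 2*C*x1"
    define \<phi> where "\<phi> = (\<lambda>x::real. A + B*x + C*x^2)"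
    have sm: "smooth_fun \<phi>" unfolding \<phi>_def by (rule smooth_quad)
    have dp: "deriv \<phi> x1 = B + 2*C*x1" unfolding \<phi>_def quad_deriv by simp
    have lm: "loc_min_rel xl (\<lambda>x. v j x - \<phi> x) x1" unfolding loc_min_rel_def
      by (rule exI[of _ d]) (use mn d in \<open>auto simp: \<phi>_def\<close>)
    have "ereal (\<rho> * v j x1) \<ge> Ham r \<gamma> x1 (y j) (B + 2*C*x1) + ereal (lam j * (v (3 - j) x1 - v j x1))"
      using sup[OF sm _ lm] x1 dp by auto
    thus "(r*x1 + y j)*(B + 2*C*x1) + k*((B + 2*C*x1) powr al) + lam j*(v (3 - j) x1 - v j x1) - \<rho> * v j x1 \<le> 0"
      unfolding Ham_pos[OF q] k_def al_def by simp
  qed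
  thus "(\<forall>x>xl. v j differentiable (at x)) \<and>
           continuous_on {xl<..} (deriv (v j)) \<and>
           (\<exists>L. ((\<lambda>e. (v j (xl + e) - v j xl) / e) \<longlongrightarrow> L) (at_right 0) \<and>
                (\<forall>R>xl. uniformly_continuous_on {xl..R}
                          (\<lambda>x. if x = xl then L else deriv (v j) x)))"
    by (rule VS.main_result)
qed

end
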